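(* Let $(\Omega,\mathbb Z^N,\alpha)$ be a dynamical system and $\omega\in\Omega$. Then $L(\omega)=\bigcup_{\eta\in S^{N-1}}L^\eta(\omega)$.
   Context: A dynamical system $(\Omega,\mathbb Z^N,\alpha)$: $\Omega$ compact metric space, $\alpha$ maps $\mathbb Z^N$ to homeomorphisms of $\Omega$ with $\alpha(g+h)=\alpha(g)\circ\alpha(h)$. $g_n\to\infty$ means $(g_n)$ eventually leaves every finite subset of $\mathbb Z^N$. $L(\omega)=\{\nu\in\Omega:\exists g_n\to\infty,\ \alpha(g_n)(\omega)\to\nu\}$. $S^{N-1}=\{\eta\in\mathbb R^N:|\eta|=1\}$. For $R>0$ and an open neighbourhood $U\subseteq S^{N-1}$ of $\eta$, $W_{R,U}:=\{k\in\mathbb Z^N:|k|>R,\ k/|k|\in U\}$. A sequence $(g_n)$ in $\mathbb Z^N$ with $g_n\to\infty$ tends to infinity in direction $\eta$ if for every such $W_{R,U}$ there is $n_0$ with $g_n\in W_{R,U}$ for all $n\ge n_0$. $L^\eta(\omega)=\{\nu\in\Omega:\exists (g_n)$ tending to infinity in direction $\eta$ with $\alpha(g_n)(\omega)\to\nu\}$. *)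

theory Defs
  imports "HOL-Analysis.Analysis"
begin

text \<open>A dynamical system (Omega, Z^N, alpha): Omega a compact subset of a metric space
  (the compact metric space), lattice points of Z^N as int^'n, each alpha g a homeomorphism
  of Omega, and alpha (g+h) = alpha g o alpha h on Omega.\<close>
definition dyn_system :: "'a::metric_space set \<Rightarrow> (int^'n \<Rightarrow> 'a \<Rightarrow> 'a) \<Rightarrow> bool" where
  "dyn_system \<Omega> \<alpha> \<longleftrightarrow> compact \<Omega> \<and>
     (\<forall>g. \<exists>h. homeomorphism \<Omega> \<Omega> (\<alpha> g) h) \<and>
     (\<forall>g h. \<forall>x\<in>\<Omega>. \<alpha> (g + h) x = \<alpha> g (\<alpha> h x))"

definition lat_real :: "int^'n \<Rightarrow> real^'n" where
  "lat_real k = (\<chi> i. real_of_int (k $ i))"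

definition tends_infty :: "(nat \<Rightarrow> int^'n) \<Rightarrow> bool" where
  "tends_infty g \<longleftrightarrow> (\<forall>F. finite F \<longrightarrow> eventually (\<lambda>n. g n \<notin> F) sequentially)"

definition W_set :: "real \<Rightarrow> (real^'n) set \<Rightarrow> (int^'n) set" where
  "W_set R U = {k. norm (lat_real k) > R \<and> lat_real k /\<^sub>R norm (lat_real k) \<in> U}"

definition tends_infty_dir :: "(nat \<Rightarrow> int^'n) \<Rightarrow> real^'n \<Rightarrow> bool" where
  "tends_infty_dir g \<eta> \<longleftrightarrow> tends_infty g \<and>
     (\<forall>R U. R > 0 \<and> openin (top_of_set (sphere 0 1)) U \<and> \<eta> \<in> U \<longrightarrow>
        eventually (\<lambda>n. g n \<in> W_set R U) sequentially)"

definition limit_set :: "'a::metric_space set \<Rightarrow> (int^'n \<Rightarrow> 'a \<Rightarrow> 'a) \<Rightarrow> 'a \<Rightarrow> 'a set" where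
  "limit_set \<Omega> \<alpha> \<omega> = {\<nu> \<in> \<Omega>. \<exists>g. tends_infty g \<and> (\<lambda>n. \<alpha> (g n) \<omega>) \<longlonglongrightarrow> \<nu>}"

definition dir_limit_set :: "'a::metric_space set \<Rightarrow> (int^'n \<Rightarrow> 'a \<Rightarrow> 'a) \<Rightarrow> real^'n \<Rightarrow> 'a \<Rightarrow> 'a set" where
  "dir_limit_set \<Omega> \<alpha> \<eta> \<omega> = {\<nu> \<in> \<Omega>. \<exists>g. tends_infty_dir g \<eta> \<and> (\<lambda>n. \<alpha> (g n) \<omega>) \<longlonglongrightarrow> \<nu>}"

end

theory Submission
  imports Defs
begin

lemma finite_small_lat: "finite {k::int^'n. norm (lat_real k) \<le> R}"
proof -
  define S where "S = {-\<lceil>R\<rceil>..\<lceil>R\<rceil>}"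
  have sub: "vec_nth ` {k::int^'n. norm (lat_real k) \<le> R} \<subseteq> PiE UNIV (\<lambda>_. S)"
  proof
    fix f assume "f \<in> vec_nth ` {k::int^'n. norm (lat_real k) \<le> R}"
    then obtain k where k: "norm (lat_real k) \<le> R" "f = vec_nth k" by auto
    have "\<And>i. k $ i \<in> S"
    proof -
      fix i
      have "\<bar>lat_real k $ i\<bar> \<le> R" using component_le_norm_cart[of "lat_real k" i] k(1) by linarith
      hence "\<bar>real_of_int (k $ i)\<bar> \<le> R" by (simp add: lat_real_def)
      have "\<lceil>\<bar>real_of_int (k $ i)\<bar>\<rceil> \<le> \<lceil>R\<rceil>" by (rule ceiling_mono) fact
      hence "\<bar>k $ i\<bar> \<le> \<lceil>R\<rceil>" by (metis ceiling_of_int of_int_abs)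
      thus "k $ i \<in> S" unfolding S_def by auto
    qed
    thus "f \<in> PiE UNIV (\<lambda>_. S)" using k by auto
  qed
  have "finite (PiE (UNIV::'n set) (\<lambda>_. S))" by (rule finite_PiE) (auto simp: S_def)
  hence "finite (vec_nth ` {k::int^'n. norm (lat_real k) \<le> R})" using sub finite_subset by blast
  thus ?thesis by (rule finite_imageD) (simp add: inj_on_def vec_eq_iff)
qed

lemma ti_norm: assumes "tends_infty g" shows "eventually (\<lambda>n. norm (lat_real (g n)) > R) sequentially"
proof -
  have "eventually (\<lambda>n. g n \<notin> {k. norm (lat_real k) \<le> R}) sequentially"
    using assms finite_small_lat unfolding tends_infty_def by blast
  thus ?thesis by (rule eventually_mono) auto
qed

lemma ti_subseq: assumes "tends_infty g" "strict_mono r" shows "tends_infty (g \<circ> r)"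
  unfolding tends_infty_def
proof (intro allI impI)
  fix F :: "(int^'a) set" assume "finite F"
  hence "eventually (\<lambda>n. g n \<notin> F) sequentially" using assms(1) unfolding tends_infty_def by blast
  thus "eventually (\<lambda>n. (g \<circ> r) n \<notin> F) sequentially"
    using eventually_compose_filterlim[OF _ filterlim_subseq[OF assms(2)]] by (simp add: comp_def)
qed

theorem lemma6p2:
  fixes \<Omega> :: "'a::metric_space set" and \<alpha> :: "int^'n \<Rightarrow> 'a \<Rightarrow> 'a" and \<omega> :: 'a
  assumes "dyn_system \<Omega> \<alpha>" and "\<omega> \<in> \<Omega>"
  shows "limit_set \<Omega> \<alpha> \<omega> = (\<Union>\<eta>\<in>sphere 0 1. dir_limit_set \<Omega> \<alpha> \<eta> \<omega>)"
proof
  show "(\<Union>\<eta>\<in>sphere 0 1. dir_limit_set \<Omega> \<alpha> \<eta> \<omega>) \<subseteq> limit_set \<Omega> \<alpha> \<omega>"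
    unfolding limit_set_def dir_limit_set_def tends_infty_dir_def by blast
next
  show "limit_set \<Omega> \<alpha> \<omega> \<subseteq> (\<Union>\<eta>\<in>sphere 0 1. dir_limit_set \<Omega> \<alpha> \<eta> \<omega>)"
  proof
    fix \<nu> assume "\<nu> \<in> limit_set \<Omega> \<alpha> \<omega>"
    then obtain g where nu: "\<nu> \<in> \<Omega>" and g: "tends_infty g" and lim: "(\<lambda>n. \<alpha> (g n) \<omega>) \<longlonglongrightarrow> \<nu>"
      unfolding limit_set_def by blast
    have "sphere (0::real^'n) 1 \<noteq> {}" by simp
    then obtain e :: "real^'n" where e: "e \<in> sphere 0 1" by blast
    define d where "d n = (if lat_real (g n) = 0 then e else lat_real (g n) /\<^sub>R norm (lat_real (g n)))" for n
    have dS: "\<forall>n. d n \<in> sphere 0 1" using e by (auto simp: d_def)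
    obtain \<eta> r where eta: "\<eta> \<in> sphere 0 1" and r: "strict_mono r" and dl: "(d \<circ> r) \<longlonglongrightarrow> \<eta>"
      using compact_imp_seq_compact[OF compact_sphere[of "0::real^'n" 1]] dS
      unfolding seq_compact_def by blast
    have gr: "tends_infty (g \<circ> r)" using ti_subseq[OF g r] .
    have "tends_infty_dir (g \<circ> r) \<eta>"
      unfolding tends_infty_dir_def
    proof (intro conjI gr allI impI)
      fix R :: real and U :: "(real^'n) set" assume H: "R > 0 \<and> openin (top_of_set (sphere 0 1)) U \<and> \<eta> \<in> U"
      then obtain V where V: "open V" "U = sphere 0 1 \<inter> V" using openin_open by blast
      have e1: "eventually (\<lambda>n. norm (lat_real ((g \<circ> r) n)) > R) sequentially"
        using ti_norm[OF gr] .
      have e2: "eventually (\<lambda>n. (d \<circ> r) n \<in> V) sequentially"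
        using dl V H by (auto simp: tendsto_def)
      show "eventually (\<lambda>n. (g \<circ> r) n \<in> W_set R U) sequentially"
        using e1 e2
      proof eventually_elim
        case (elim n)
        have "lat_real (g (r n)) \<noteq> 0" using elim(1) H by auto
        hence "d (r n) = lat_real (g (r n)) /\<^sub>R norm (lat_real (g (r n)))" by (simp add: d_def)
        moreover have "norm (lat_real (g (r n))) > 0" using elim(1) H by (simp add: comp_def del: zero_less_norm_iff)
        ultimately show ?case using elim dS V H unfolding W_set_def by auto
      qed
    qed
    moreover have "(\<lambda>n. \<alpha> ((g \<circ> r) n) \<omega>) \<longlonglongrightarrow> \<nu>"
      using LIMSEQ_subseq_LIMSEQ[OF lim r] by (simp add: comp_def)
    ultimately show "\<nu> \<in> (\<Union>\<eta>\<in>sphere 0 1. dir_limit_set \<Omega> \<alpha> \<eta> \<omega>)"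
      using eta nu unfolding dir_limit_set_def by blast
  qed
qed

end
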